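(* Let $\delta\ge1$ and let $f_{\text{in}}$ be a (possibly randomized, cardinal or ordinal) voting rule such that for every single-electorate instance (any nonempty finite set of agents with unit-sum valuations over $A$) we have $\max_{a\in A}\mathrm{SW}(a)\le \delta\cdot\mathbb{E}[\mathrm{SW}(f_{\text{in}})]$. Let $M$ be the distributed mechanism Uniform-of-$f_{\text{in}}$: each district $d$ selects its representative $a_d$ by applying $f_{\text{in}}$ to the agents of $N_d$, and the winner is $a_d$ for a district $d$ chosen uniformly at random from $D$. Then for every instance with $k$ districts (of arbitrary, possibly unequal, sizes), $\max_{a\in A}\mathrm{SW}(a)\le k\delta\cdot\mathbb{E}[\mathrm{SW}(M)]$; that is, the distortion of $M$ is at most $k\delta$. *)

theory Defs
  imports "HOL-Probability.Probability"
begin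

text \<open>Alternatives form a finite type 'a (the set A is UNIV). Agents have type 'i.
  A valuation profile v assigns to agent i and alternative a the value v i a.\<close>

definition unit_sum :: "'i set \<Rightarrow> ('i \<Rightarrow> 'a::finite \<Rightarrow> real) \<Rightarrow> bool" where
  "unit_sum N v \<longleftrightarrow> (\<forall>i\<in>N. (\<forall>a. v i a \<ge> 0) \<and> (\<Sum>a\<in>UNIV. v i a) = 1)"

definition SW :: "'i set \<Rightarrow> ('i \<Rightarrow> 'a \<Rightarrow> real) \<Rightarrow> 'a \<Rightarrow> real" where
  "SW N v a = (\<Sum>i\<in>N. v i a)"

text \<open>A (randomized) voting rule maps an electorate and a valuation profile to a
  distribution over alternatives (ordinal rules are the special case depending only on rankings).\<close>
type_synonym ('i, 'a) rule = "'i set \<Rightarrow> ('i \<Rightarrow> 'a \<Rightarrow> real) \<Rightarrow> 'a pmf"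

definition uniform_of :: "('i, 'a) rule \<Rightarrow> 'd set \<Rightarrow> ('d \<Rightarrow> 'i set) \<Rightarrow> ('i \<Rightarrow> 'a \<Rightarrow> real) \<Rightarrow> 'a pmf" where
  "uniform_of f D Nd v = bind_pmf (pmf_of_set D) (\<lambda>d. f (Nd d) v)"

end

theory Submission
  imports Defs
begin

lemma exp_fin: "measure_pmf.expectation (p::'a::finite pmf) g = (\<Sum>a\<in>UNIV. g a * pmf p a)"
  by (rule integral_measure_pmf_real) auto

lemma exp_unif:
  assumes "finite D" "D \<noteq> {}"
  shows "measure_pmf.expectation (bind_pmf (pmf_of_set D) F) (g::'a::finite \<Rightarrow> real)
     = (\<Sum>d\<in>D. measure_pmf.expectation (F d) g) / card D"
proof -
  have "measure_pmf.expectation (bind_pmf (pmf_of_set D) F) g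
      = (\<Sum>a\<in>UNIV. g a * ((\<Sum>d\<in>D. pmf (F d) a) / card D))"
    using assms by (simp add: exp_fin pmf_bind integral_pmf_of_set)
  also have "\<dots> = (\<Sum>a\<in>UNIV. \<Sum>d\<in>D. g a * pmf (F d) a) / card D"
    by (simp add: sum_distrib_left sum_divide_distrib)
  also have "\<dots> = (\<Sum>d\<in>D. \<Sum>a\<in>UNIV. g a * pmf (F d) a) / card D"
    by (subst sum.swap) simp
  finally show ?thesis by (simp add: exp_fin)
qed

theorem theorem4:
  fixes f :: "('i, 'a::finite) rule" and \<delta> :: real
    and D :: "'d set" and Nd :: "'d \<Rightarrow> 'i set" and v :: "'i \<Rightarrow> 'a \<Rightarrow> real"
  assumes delta: "\<delta> \<ge> 1"
    and f_dist: "\<And>N w. finite N \<Longrightarrow> N \<noteq> {} \<Longrightarrow> unit_sum N w \<Longrightarrow>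
        Max (range (SW N w)) \<le> \<delta> * measure_pmf.expectation (f N w) (SW N w)"
    and D_fin: "finite D" and D_ne: "D \<noteq> {}"
    and Nd_fin: "\<And>d. d \<in> D \<Longrightarrow> finite (Nd d)"
    and Nd_ne: "\<And>d. d \<in> D \<Longrightarrow> Nd d \<noteq> {}"
    and Nd_disj: "\<And>d d'. d \<in> D \<Longrightarrow> d' \<in> D \<Longrightarrow> d \<noteq> d' \<Longrightarrow> Nd d \<inter> Nd d' = {}"
    and v_unit: "unit_sum (\<Union>d\<in>D. Nd d) v"
  shows "Max (range (SW (\<Union>d\<in>D. Nd d) v))
         \<le> real (card D) * \<delta> * measure_pmf.expectation (uniform_of f D Nd v) (SW (\<Union>d\<in>D. Nd d) v)"
proof -
  define N where "N = (\<Union>d\<in>D. Nd d)"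
  have nonneg: "\<And>i a. i \<in> N \<Longrightarrow> v i a \<ge> 0" using v_unit unfolding unit_sum_def N_def by blast
  have unit_d: "\<And>d. d \<in> D \<Longrightarrow> unit_sum (Nd d) v" using v_unit unfolding unit_sum_def by blast
  have sub: "\<And>d. d \<in> D \<Longrightarrow> Nd d \<subseteq> N" unfolding N_def by blast
  have finN: "finite N" unfolding N_def using D_fin Nd_fin by blast
  obtain a0 where a0: "Max (range (SW N v)) = SW N v a0"
  proof -
    have "Max (range (SW N v)) \<in> range (SW N v)" by (rule Max_in) auto
    thus ?thesis using that by (auto simp: image_iff)
  qed
  have "SW N v a0 = (\<Sum>d\<in>D. SW (Nd d) v a0)"
    unfolding SW_def N_def
    by (rule sum.UNION_disjoint) (use D_fin Nd_fin Nd_disj in auto)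
  also have "\<dots> \<le> (\<Sum>d\<in>D. Max (range (SW (Nd d) v)))"
    by (rule sum_mono) auto
  also have "\<dots> \<le> (\<Sum>d\<in>D. \<delta> * measure_pmf.expectation (f (Nd d) v) (SW (Nd d) v))"
    by (rule sum_mono, rule f_dist) (auto simp: Nd_fin Nd_ne unit_d)
  also have "\<dots> \<le> (\<Sum>d\<in>D. \<delta> * measure_pmf.expectation (f (Nd d) v) (SW N v))"
  proof (rule sum_mono)
    fix d assume d: "d \<in> D"
    have "\<And>a. SW (Nd d) v a \<le> SW N v a"
      unfolding SW_def by (rule sum_mono2) (use finN sub[OF d] nonneg in auto)
    hence "(\<Sum>a\<in>UNIV. SW (Nd d) v a * pmf (f (Nd d) v) a) \<le> (\<Sum>a\<in>UNIV. SW N v a * pmf (f (Nd d) v) a)"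
      by (intro sum_mono mult_right_mono) auto
    thus "\<delta> * measure_pmf.expectation (f (Nd d) v) (SW (Nd d) v) \<le> \<delta> * measure_pmf.expectation (f (Nd d) v) (SW N v)"
      using delta by (simp add: exp_fin)
  qed
  also have "\<dots> = real (card D) * \<delta> * measure_pmf.expectation (uniform_of f D Nd v) (SW N v)"
    using D_fin D_ne by (simp add: uniform_of_def exp_unif sum_distrib_left[symmetric])
  finally show ?thesis using a0 unfolding N_def by simp
qed

end
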